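(* Let $q$ be a power of $2$ and $f(X)=X(X^{q-1}-c)^{q+1}$ on $\mathbb{F}_{q^2}$, with $a,\beta,g,L_{[u:v]},\mathbb{P}^1$ as in the context. If $c\in\mathbb{F}_q\setminus\{0,1\}$, then $\mathcal{G}(f)$ is isomorphic to \[ \mathcal{C}_1\oplus\bigoplus_{L_{[u:v]}\in\mathbb{P}^1}\frac{q-1}{\operatorname{ord}(g(u,v))}\times\mathcal{C}_{\operatorname{ord}(g(u,v))}. \] If $c=1$, then $\mathcal{G}(f)$ is isomorphic to \[ (\mathcal{C}_1,\mathcal{T}_{q-1})\oplus\bigoplus_{L_{[u:v]}\in\mathbb{P}^1\setminus\{L_{[1:0]}\}}\frac{q-1}{\operatorname{ord}(g(u,v))}\times\mathcal{C}_{\operatorname{ord}(g(u,v))}. \]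
   Context: $a\in\mathbb{F}_q$ with $\operatorname{Tr}(a)=1$ (absolute trace to $\mathbb{F}_2$), $\beta\in\mathbb{F}_{q^2}$ with $\beta^2+\beta+a=0$; every element of $\mathbb{F}_{q^2}$ is uniquely $x+y\beta$, $x,y\in\mathbb{F}_q$. For $(x,y)\neq(0,0)$, $g(x,y)=c^2+1+\frac{cy^2}{x^2+xy+y^2a}\in\mathbb{F}_q$, invariant under scaling by $\mathbb{F}_q^*$. For $(u,v)\neq(0,0)$, $L_{[u:v]}=\{\lambda(u+v\beta):\lambda\in\mathbb{F}_q\}$, $\mathbb{P}^1$ is the set of these $q+1$ lines, and $\operatorname{ord}$ is multiplicative order in $\mathbb{F}_q^*$. $\mathcal{G}(f)$ is the functional graph (vertices $\mathbb{F}_{q^2}$, edges $\langle x,f(x)\rangle$). Graph notation: $\mathcal{C}_n$ is an oriented cycle of length $n$; $\mathcal{T}_m$ is the directed tree with $m+1$ vertices $P_1,\dots,P_{m+1}$ and edges $P_i\to P_{m+1}$ for $1\le i\le m$; $(\mathcal{C}_n,\mathcal{T}_m)$ is the graph obtained by replacing each vertex of $\mathcal{C}_n$ by a copy of $\mathcal{T}_m$ (identifying the cycle vertex with the root $P_{m+1}$); $\mathcal{G}\oplus\mathcal{H}$ is disjoint union; $k\times\mathcal{H}$ is the disjoint union of $k$ copies of $\mathcal{H}$. *)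

theory Defs
  imports Main
begin

type_synonym 'v digraph = "'v set \<times> ('v \<times> 'v) set"

definition verts :: "'v digraph \<Rightarrow> 'v set" where "verts G = fst G"
definition arcs :: "'v digraph \<Rightarrow> ('v \<times> 'v) set" where "arcs G = snd G"

definition graph_iso :: "'v digraph \<Rightarrow> 'w digraph \<Rightarrow> bool" where
  "graph_iso G H \<longleftrightarrow> (\<exists>h. bij_betw h (verts G) (verts H) \<and>
      (\<forall>x\<in>verts G. \<forall>y\<in>verts G. (x, y) \<in> arcs G \<longleftrightarrow> (h x, h y) \<in> arcs H))"

definition functional_graph :: "('a \<Rightarrow> 'a) \<Rightarrow> 'a digraph" where
  "functional_graph f = (UNIV, {(x, f x) | x. True})"

definition cycle_graph :: "nat \<Rightarrow> nat digraph" where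
  "cycle_graph n = ({0..<n}, {(i, (i + 1) mod n) | i. i < n})"

text \<open>Tree T_m: vertices P_1..P_{m+1} rendered as 1..m+1, edges P_i -> P_{m+1}.\<close>
definition tree_graph :: "nat \<Rightarrow> nat digraph" where
  "tree_graph m = ({1..m+1}, {(i, m + 1) | i. 1 \<le> i \<and> i \<le> m})"

text \<open>(C_n, T_m): each vertex of C_n replaced by a copy of T_m, cycle vertex = root.\<close>
definition cycle_tree_graph :: "nat \<Rightarrow> nat \<Rightarrow> (nat \<times> nat) digraph" where
  "cycle_tree_graph n m =
     ({0..<n} \<times> {1..m+1},
      {((i, j), (i, m + 1)) | i j. i < n \<and> 1 \<le> j \<and> j \<le> m}
      \<union> {((i, m + 1), ((i + 1) mod n, m + 1)) | i. i < n})"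

definition graph_sum :: "'v digraph \<Rightarrow> 'w digraph \<Rightarrow> ('v + 'w) digraph" where
  "graph_sum G H = (Inl ` verts G \<union> Inr ` verts H,
     {(Inl x, Inl y) | x y. (x, y) \<in> arcs G} \<union> {(Inr x, Inr y) | x y. (x, y) \<in> arcs H})"

definition graph_Sum :: "'i set \<Rightarrow> ('i \<Rightarrow> 'v digraph) \<Rightarrow> ('i \<times> 'v) digraph" where
  "graph_Sum I G = (SIGMA i:I. verts (G i),
     {((i, x), (i, y)) | i x y. i \<in> I \<and> (x, y) \<in> arcs (G i)})"

definition graph_copies :: "nat \<Rightarrow> 'v digraph \<Rightarrow> (nat \<times> 'v) digraph" where
  "graph_copies k H = graph_Sum {0..<k} (\<lambda>_. H)"

text \<open>The subfield F_q inside a field K of order q^2.\<close>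
definition Fq :: "nat \<Rightarrow> 'a::field set" where
  "Fq q = {x. x ^ q = x}"

definition abs_trace :: "nat \<Rightarrow> 'a::field \<Rightarrow> 'a" where
  "abs_trace n a = (\<Sum>i<n. a ^ (2 ^ i))"

definition mult_ord :: "'a::field \<Rightarrow> nat" where
  "mult_ord x = (LEAST k. 0 < k \<and> x ^ k = 1)"

definition gfun :: "'a::field \<Rightarrow> 'a \<Rightarrow> 'a \<Rightarrow> 'a \<Rightarrow> 'a" where
  "gfun a c x y = c ^ 2 + 1 + c * y ^ 2 / (x ^ 2 + x * y + y ^ 2 * a)"

definition line :: "nat \<Rightarrow> 'a::field \<Rightarrow> 'a \<Rightarrow> 'a \<Rightarrow> 'a set" where
  "line q \<beta> u v = {l * (u + v * \<beta>) | l. l \<in> Fq q}"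

definition P1 :: "nat \<Rightarrow> 'a::field \<Rightarrow> 'a set set" where
  "P1 q \<beta> = {line q \<beta> u v | u v. u \<in> Fq q \<and> v \<in> Fq q \<and> (u, v) \<noteq> (0, 0)}"

text \<open>A chosen representative (u,v) of a line; g(u,v) does not depend on the choice.\<close>
definition line_rep :: "nat \<Rightarrow> 'a::field \<Rightarrow> 'a set \<Rightarrow> 'a \<times> 'a" where
  "line_rep q \<beta> L = (SOME (u, v). u \<in> Fq q \<and> v \<in> Fq q \<and> (u, v) \<noteq> (0, 0) \<and> L = line q \<beta> u v)"

definition ordg :: "nat \<Rightarrow> 'a::field \<Rightarrow> 'a \<Rightarrow> 'a \<Rightarrow> 'a set \<Rightarrow> nat" where
  "ordg q \<beta> a c L = mult_ord (case line_rep q \<beta> L of (u, v) \<Rightarrow> gfun a c u v)"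

definition line_part :: "nat \<Rightarrow> 'a::field \<Rightarrow> 'a \<Rightarrow> 'a \<Rightarrow> 'a set set
    \<Rightarrow> ('a set \<times> nat \<times> nat) digraph" where
  "line_part q \<beta> a c S = graph_Sum S (\<lambda>L.
     graph_copies ((q - 1) div ordg q \<beta> a c L) (cycle_graph (ordg q \<beta> a c L)))"

end

theory Submission
  imports Defs
begin


locale FF =
  fixes q n :: nat and a \<beta> :: "'a::{field,finite}"
  assumes q_def: "q = 2 ^ n" and cardU: "card (UNIV :: 'a set) = q ^ 2"
    and a_Fq: "a \<in> Fq q" and tr: "abs_trace n a = 1"
    and beta: "\<beta> ^ 2 + \<beta> + a = 0"
begin

lemma pow_card_minus1:
  fixes x :: 'a assumes "x \<noteq> 0" shows "x ^ (q^2 - 1) = 1"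
proof -
  let ?N = "UNIV - {0::'a}"
  have cN: "card ?N = q^2 - 1" using cardU by (simp add: card_Diff_singleton)
  have bij: "bij_betw (\<lambda>y. x * y) ?N ?N"
    unfolding bij_betw_def inj_on_def using assms
    apply (auto simp: image_def)
    subgoal for y by (rule bexI[of _ "y / x"]) auto
    done
  have "prod (\<lambda>y. x * y) ?N = prod (\<lambda>y. y) ?N"
    using prod.reindex_bij_betw[OF bij, of "\<lambda>y. y"] by simp
  moreover have "prod (\<lambda>y. x * y) ?N = x ^ card ?N * prod (\<lambda>y. y) ?N"
    by (simp add: prod.distrib)
  moreover have "prod (\<lambda>y. y) ?N \<noteq> 0" by simp
  ultimately show ?thesis using cN by simp
qed

lemma pow_card: "(x::'a) ^ (q^2) = x"
proof (cases "x = 0")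
  case True
  have "q^2 > 0" using cardU by (metis card_gt_0_iff finite UNIV_not_empty)
  then show ?thesis using True by simp
next
  case False
  have "q^2 > 0" using cardU by (metis card_gt_0_iff finite UNIV_not_empty)
  then have "x ^ (q^2) = x ^ (q^2 - 1) * x" using power_minus_mult[of "q^2" x] by simp
  then show ?thesis using pow_card_minus1[OF False] by simp
qed

lemma n_pos: "n \<ge> 1"
proof (rule ccontr)
  assume "\<not> n \<ge> 1"
  then have "q = 1" using q_def by simp
  then have "card (UNIV::'a set) = 1" using cardU by simp
  moreover have "{0::'a, 1} \<subseteq> UNIV" by simp
  then have "card {0::'a,1} \<le> card (UNIV::'a set)" by (intro card_mono) auto
  ultimately show False by simp
qed

lemma q_ge2: "q \<ge> 2"
proof -
  have "(2::nat) ^ 1 \<le> 2 ^ n" using n_pos by (intro power_increasing) auto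
  then show ?thesis using q_def by simp
qed

lemma two: "(2::'a) = 0"
proof -
  have ev: "even (q^2)" using q_ge2 q_def n_pos by (simp add: q_def)
  have "(-1::'a) ^ (q^2) = -1" by (rule pow_card)
  moreover have "(-1::'a) ^ (q^2) = 1" using ev by simp
  ultimately have "(1::'a) = -1" by simp
  then have "(1::'a) + 1 = 0" by (metis add.right_inverse)
  then show ?thesis by simp
qed

lemma add_self[simp]: "(x::'a) + x = 0"
  by (metis mult_2 two mult_zero_left)

lemma minus_id[simp]: "- (x::'a) = x"
  by (metis add_self add.inverse_unique)

lemma add_eq0: "(x::'a) + y = 0 \<Longrightarrow> x = y"
  using add.inverse_unique[of x y] by simp

lemma diff_is_add: "(x::'a) - y = x + y"
  by (metis minus_id diff_conv_add_uminus)

lemma frob2: "((x::'a) + y) ^ 2 = x^2 + y^2"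
proof -
  have "(x+y)^2 = x^2 + y^2 + 2*(x*y)" by (simp add: power2_eq_square algebra_simps)
  then show ?thesis by (simp add: two)
qed

lemma frobk: "((x::'a) + y) ^ (2^k) = x^(2^k) + y^(2^k)"
proof (induction k)
  case 0 then show ?case by simp
next
  case (Suc k)
  have "(x+y)^(2^Suc k) = ((x+y)^(2^k))^2" by (simp add: power_mult[symmetric] mult.commute)
  also have "\<dots> = (x^(2^k))^2 + (y^(2^k))^2" using Suc frob2 by simp
  also have "\<dots> = x^(2^Suc k) + y^(2^Suc k)" by (simp add: power_mult[symmetric] mult.commute)
  finally show ?case .
qed

lemma frob: "((x::'a) + y) ^ q = x^q + y^q"
  using frobk q_def by simp

lemma q_pos: "q > 0" using q_ge2 by simp

lemma Fq_iff: "(x::'a) \<in> Fq q \<longleftrightarrow> x ^ q = x" by (simp add: Fq_def)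

lemma Fq_0[simp]: "(0::'a) \<in> Fq q" using q_pos by (simp add: Fq_def)
lemma Fq_1[simp]: "(1::'a) \<in> Fq q" by (simp add: Fq_def)
lemma Fq_add: "(x::'a) \<in> Fq q \<Longrightarrow> y \<in> Fq q \<Longrightarrow> x + y \<in> Fq q" unfolding Fq_def using frob by simp
lemma Fq_mult: "(x::'a) \<in> Fq q \<Longrightarrow> y \<in> Fq q \<Longrightarrow> x * y \<in> Fq q" by (simp add: Fq_def power_mult_distrib)
lemma Fq_div: "(x::'a) \<in> Fq q \<Longrightarrow> y \<in> Fq q \<Longrightarrow> x / y \<in> Fq q" by (simp add: Fq_def power_divide)
lemma Fq_pow: "(x::'a) \<in> Fq q \<Longrightarrow> x ^ k \<in> Fq q"
  unfolding Fq_def by (metis (mono_tags) mem_Collect_eq power_mult mult.commute)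

lemma pow_qq: "((x::'a) ^ q) ^ q = x"
  using pow_card[of x] by (simp add: power_mult[symmetric] power2_eq_square)

lemma Fq_pow_qm1: "(x::'a) \<in> Fq q \<Longrightarrow> x \<noteq> 0 \<Longrightarrow> x ^ (q - 1) = 1"
  using power_minus_mult[OF q_pos, of x] by (simp add: Fq_def)

lemma beta_notin: "\<beta> \<notin> Fq q"
proof
  assume b: "\<beta> \<in> Fq q"
  have aeq: "a = \<beta>^2 + \<beta>" using beta by (metis add.commute add_self add.left_cancel add.assoc add_0_right)
  have "abs_trace n a = (\<Sum>i<n. (\<beta>^(2^Suc i) - \<beta>^(2^i)))"
    unfolding abs_trace_def aeq frobk diff_is_add
    by (simp add: power_mult[symmetric] mult.commute)
  also have "\<dots> = \<beta>^(2^n) - \<beta>^(2^0)" by (rule sum_lessThan_telescope)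
  also have "\<dots> = 0" using b q_def by (simp add: Fq_def)
  finally show False using tr by simp
qed

end



lemma funpow_in: "h ` S \<subseteq> S \<Longrightarrow> y \<in> S \<Longrightarrow> (h ^^ i) y \<in> S"
  by (induction i) auto

lemma funpow_period:
  assumes "(h ^^ d) y = y" shows "(h ^^ m) y = (h ^^ (m mod d)) y"
proof -
  have per: "(h ^^ (t * d)) y = y" for t
    by (induction t) (simp_all add: funpow_add assms)
  have "m = m mod d + (m div d) * d" by simp
  then have "(h ^^ m) y = (h ^^ (m mod d)) ((h ^^ ((m div d) * d)) y)"
    by (metis funpow_add comp_apply)
  then show ?thesis using per by simp
qed

lemma orbit_decomp:
  fixes h :: "'b \<Rightarrow> 'b"
  assumes "finite S" "0 < d" "h ` S \<subseteq> S" "\<forall>x\<in>S. (h ^^ d) x = x"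
    "\<forall>x\<in>S. \<forall>i. 0 < i \<and> i < d \<longrightarrow> (h ^^ i) x \<noteq> x"
  shows "\<exists>k \<phi>. card S = k * d \<and> bij_betw \<phi> ({0..<k} \<times> {0..<d}) S \<and>
           (\<forall>j<k. \<forall>i<d. \<phi> (j, Suc i mod d) = h (\<phi> (j, i)))"
  using assms
proof (induction "card S" arbitrary: S rule: less_induct)
  case less
  show ?case
  proof (cases "S = {}")
    case True
    then show ?thesis by (intro exI[of _ 0] exI[of _ "\<lambda>_. undefined"]) (auto simp: bij_betw_def)
  next
    case False
    then obtain x where x: "x \<in> S" by auto
    define Orb where "Orb = (\<lambda>i. (h ^^ i) x) ` {0..<d}"
    have inS: "(h ^^ i) y \<in> S" if "y \<in> S" for i y using funpow_in[OF less.prems(3) that] .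
    have per: "(h ^^ m) y = (h ^^ (m mod d)) y" if "y \<in> S" for m y
      using funpow_period less.prems(4) that by metis
    have inj1: "inj_on (\<lambda>i. (h ^^ i) x) {0..<d}"
    proof (rule inj_onI, rule ccontr)
      fix i j assume ij: "i \<in> {0..<d}" "j \<in> {0..<d}" "(h ^^ i) x = (h ^^ j) x" "i \<noteq> j"
      have *: False if "i < j" "j < d" "(h ^^ i) x = (h ^^ j) x" for i j
      proof -
        have "(h ^^ (j - i)) ((h ^^ i) x) = (h ^^ j) x"
          using that by (metis funpow_add comp_apply le_add_diff_inverse2 less_imp_le)
        then show False using less.prems(5) inS[OF x, of i] that by auto
      qed
      show False using ij *[of i j] *[of j i] by (cases "i < j") auto
    qed
    have cO: "card Orb = d" unfolding Orb_def using card_image[OF inj1] by simp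
    have OS: "Orb \<subseteq> S" unfolding Orb_def using inS[OF x] by auto
    define S' where "S' = S - Orb"
    have inv: "h ` S' \<subseteq> S'"
    proof
      fix z assume "z \<in> h ` S'"
      then obtain y where y: "y \<in> S'" "z = h y" by auto
      have yS: "y \<in> S" using y S'_def by auto
      have "z \<in> S" using y less.prems(3) yS by auto
      moreover have "z \<notin> Orb"
      proof
        assume "z \<in> Orb"
        then obtain i where i: "i < d" "z = (h ^^ i) x" unfolding Orb_def by auto
        have "y = (h ^^ d) y" using less.prems(4) yS by simp
        also have "\<dots> = (h ^^ (d - 1)) (h y)"
          using less.prems(2) by (metis Suc_diff_1 funpow_Suc_right comp_apply)
        also have "\<dots> = (h ^^ (d - 1 + i)) x" using i y by (simp only: funpow_add comp_apply)
        also have "\<dots> = (h ^^ ((d - 1 + i) mod d)) x" using per[OF x] by simp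
        finally have "y \<in> Orb" unfolding Orb_def using less.prems(2) by auto
        then show False using y S'_def by auto
      qed
      ultimately show "z \<in> S'" unfolding S'_def by auto
    qed
    have cS': "card S' = card S - d" unfolding S'_def using card_Diff_subset[OF _ OS] less.prems(1) cO
      by (metis finite_subset OS)
    have dle: "d \<le> card S" using cO OS less.prems(1) card_mono by metis
    have "card S' < card S" using cS' less.prems(2) dle by simp
    then obtain k \<phi> where IH: "card S' = k * d" "bij_betw \<phi> ({0..<k} \<times> {0..<d}) S'"
       "\<forall>j<k. \<forall>i<d. \<phi> (j, Suc i mod d) = h (\<phi> (j, i))"
      using less.hyps[of S'] less.prems inv unfolding S'_def by auto
    define \<psi> where "\<psi> = (\<lambda>(j, i). if j = 0 then (h ^^ i) x else \<phi> (j - 1, i))"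
    have "card S = Suc k * d" using cS' IH(1) dle by simp
    moreover have "bij_betw \<psi> ({0..<Suc k} \<times> {0..<d}) S"
    proof -
      have A: "bij_betw \<psi> ({0} \<times> {0..<d}) Orb"
      proof -
        have "bij_betw (\<lambda>p. (h ^^ snd p) x) ({0::nat} \<times> {0..<d}) Orb"
        proof -
          have "bij_betw snd ({0::nat} \<times> {0..<d}) {0..<d}"
            by (rule bij_betw_byWitness[where f' = "\<lambda>i. (0, i)"]) auto
          moreover have "bij_betw (\<lambda>i. (h ^^ i) x) {0..<d} Orb"
            unfolding Orb_def using inj1 by (simp add: bij_betw_def)
          ultimately have "bij_betw ((\<lambda>i. (h ^^ i) x) \<circ> snd) ({0::nat} \<times> {0..<d}) Orb"
            by (rule bij_betw_trans)
          then show ?thesis by (simp add: comp_def)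
        qed
        then show ?thesis by (rule bij_betw_cong[THEN iffD1, rotated]) (auto simp: \<psi>_def)
      qed
      have sh: "bij_betw (\<lambda>(j, i). (j - 1, i)) ({1..<Suc k} \<times> {0..<d}) ({0..<k} \<times> {0..<d})"
        by (rule bij_betw_byWitness[where f' = "\<lambda>(j, i). (Suc j, i)"]) auto
      have B: "bij_betw \<psi> ({1..<Suc k} \<times> {0..<d}) S'"
      proof -
        have "bij_betw (\<phi> \<circ> (\<lambda>(j, i). (j - 1, i))) ({1..<Suc k} \<times> {0..<d}) S'"
          using bij_betw_trans[OF sh IH(2)] .
        then show ?thesis
          by (rule bij_betw_cong[THEN iffD1, rotated]) (auto simp: \<psi>_def)
      qed
      have "bij_betw \<psi> ({0} \<times> {0..<d} \<union> {1..<Suc k} \<times> {0..<d}) (Orb \<union> S')"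
        by (rule bij_betw_combine[OF A B]) (auto simp: S'_def)
      moreover have "{0} \<times> {0..<d} \<union> {1..<Suc k} \<times> {0..<d} = {0..<Suc k} \<times> {0..<d}" by auto
      moreover have "Orb \<union> S' = S" using OS S'_def by auto
      ultimately show ?thesis by simp
    qed
    moreover have "\<forall>j<Suc k. \<forall>i<d. \<psi> (j, Suc i mod d) = h (\<psi> (j, i))"
    proof (intro allI impI)
      fix j i assume j: "j < Suc k" and i: "i < d"
      show "\<psi> (j, Suc i mod d) = h (\<psi> (j, i))"
      proof (cases "j = 0")
        case True
        have "(h ^^ (Suc i mod d)) x = (h ^^ Suc i) x" using per[OF x] by simp
        then show ?thesis using True by (simp add: \<psi>_def)
      next
        case False
        then show ?thesis using IH(3) j i by (simp add: \<psi>_def)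
      qed
    qed
    ultimately show ?thesis by blast
  qed
qed




lemma iso_from:
  assumes b: "bij_betw \<Phi> V (UNIV::'a set)" and v: "verts H = V"
    and ar: "\<forall>p\<in>V. \<forall>p'\<in>V. (p, p') \<in> arcs H \<longleftrightarrow> \<Phi> p' = f (\<Phi> p)"
  shows "graph_iso (functional_graph f) H"
proof -
  define h where "h = inv_into V \<Phi>"
  have hb: "bij_betw h UNIV V" unfolding h_def by (rule bij_betw_inv_into[OF b])
  have hV: "h x \<in> V" for x using hb by (auto simp: bij_betw_def)
  have Ph: "\<Phi> (h x) = x" for x unfolding h_def using b by (simp add: bij_betw_inv_into_right)
  show ?thesis unfolding graph_iso_def
  proof (intro exI[of _ h] conjI ballI)
    show "bij_betw h (verts (functional_graph f)) (verts H)"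
      using hb v by (simp add: functional_graph_def verts_def)
    fix x y assume "x \<in> verts (functional_graph f)" "y \<in> verts (functional_graph f)"
    have "(h x, h y) \<in> arcs H \<longleftrightarrow> y = f x" using ar hV Ph by metis
    then show "(x, y) \<in> arcs (functional_graph f) \<longleftrightarrow> (h x, h y) \<in> arcs H"
      by (simp add: functional_graph_def arcs_def)
  qed
qed

lemma arcs_sum_Inr: "(Inr x, Inr y) \<in> arcs (graph_sum G H) \<longleftrightarrow> (x, y) \<in> arcs H"
  unfolding graph_sum_def arcs_def by auto
lemma arcs_sum_Inl: "(Inl x, Inl y) \<in> arcs (graph_sum G H) \<longleftrightarrow> (x, y) \<in> arcs G"
  unfolding graph_sum_def arcs_def by auto
lemma arcs_sum_LR: "(Inl x, Inr y) \<notin> arcs (graph_sum G H)"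
  unfolding graph_sum_def arcs_def by auto
lemma arcs_sum_RL: "(Inr x, Inl y) \<notin> arcs (graph_sum G H)"
  unfolding graph_sum_def arcs_def by auto
lemma verts_sum: "verts (graph_sum G H) = Inl ` verts G \<union> Inr ` verts H"
  unfolding graph_sum_def verts_def by simp
lemma verts_Sc: "verts (graph_Sum S (\<lambda>L. graph_copies (k L) (cycle_graph (d L)))) = (SIGMA L:S. {0..<k L} \<times> {0..<d L})"
  unfolding graph_Sum_def graph_copies_def cycle_graph_def verts_def by simp
lemma arcs_Sc: "((L, j, i), (L', j', i')) \<in> arcs (graph_Sum S (\<lambda>L. graph_copies (k L) (cycle_graph (d L))))
   \<longleftrightarrow> L \<in> S \<and> L' = L \<and> j < k L \<and> j' = j \<and> i < d L \<and> i' = Suc i mod d L"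
  unfolding graph_Sum_def graph_copies_def cycle_graph_def arcs_def by auto

lemma assemble:
  fixes F :: "'a \<Rightarrow> 'a" and Phb :: "'v \<Rightarrow> 'a" and H0 :: "'v digraph"
    and S :: "'l set" and T :: "'l \<Rightarrow> 'a set" and \<Psi> :: "'l \<Rightarrow> nat \<times> nat \<Rightarrow> 'a"
  assumes b0: "bij_betw Phb (verts H0) B"
   and a0: "\<forall>p\<in>verts H0. \<forall>p'\<in>verts H0. (p, p') \<in> arcs H0 \<longleftrightarrow> Phb p' = F (Phb p)"
   and FB: "F ` B \<subseteq> B"
   and bL: "\<forall>L\<in>S. bij_betw (\<Psi> L) ({0..<k L} \<times> {0..<d L}) (T L)"
   and aL: "\<forall>L\<in>S. \<forall>j<k L. \<forall>i<d L. \<Psi> L (j, Suc i mod d L) = F (\<Psi> L (j, i))"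
   and dB: "\<forall>L\<in>S. T L \<inter> B = {}"
   and dT: "\<forall>L1\<in>S. \<forall>L2\<in>S. L1 \<noteq> L2 \<longrightarrow> T L1 \<inter> T L2 = {}"
   and cov: "B \<union> (\<Union>L\<in>S. T L) = UNIV"
  shows "graph_iso (functional_graph F)
     (graph_sum H0 (graph_Sum S (\<lambda>L. graph_copies (k L) (cycle_graph (d L)))))"
proof -
  define H1 where "H1 = graph_Sum S (\<lambda>L. graph_copies (k L) (cycle_graph (d L)))"
  define V1 where "V1 = (SIGMA L:S. {0..<k L} \<times> {0..<d L})"
  define \<Phi>1 where "\<Phi>1 = (\<lambda>(L::'l, j::nat, i::nat). \<Psi> L (j, i))"
  define \<Phi> where "\<Phi> = case_sum Phb \<Phi>1"
  have memV1: "\<exists>L j i. p = (L, j, i) \<and> L \<in> S \<and> j < k L \<and> i < d L" if "p \<in> V1" for p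
  proof -
    obtain L j i where "p = (L, j, i)" by (metis prod.collapse)
    then show ?thesis using that unfolding V1_def by auto
  qed
  have V1I: "(L, j, i) \<in> V1" if "L \<in> S" "j < k L" "i < d L" for L j i
    using that unfolding V1_def by simp
  have psiT: "\<Psi> L (j, i) \<in> T L" if "L \<in> S" "j < k L" "i < d L" for L j i
  proof -
    have "(j, i) \<in> {0..<k L} \<times> {0..<d L}" using that by simp
    then show ?thesis using bij_betw_apply[OF bL[rule_format, OF that(1)]] by blast
  qed
  have psiinj: "(j, i) = (j', i')" if "L \<in> S" "j < k L" "i < d L" "j' < k L" "i' < d L"
    "\<Psi> L (j, i) = \<Psi> L (j', i')" for L j i j' i'
  proof -
    have "inj_on (\<Psi> L) ({0..<k L} \<times> {0..<d L})" by (rule bij_betw_imp_inj_on[OF bL[rule_format, OF that(1)]])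
    moreover have "(j, i) \<in> {0..<k L} \<times> {0..<d L}" "(j', i') \<in> {0..<k L} \<times> {0..<d L}" using that(2-5) by auto
    ultimately show ?thesis using inj_onD that(6) by metis
  qed
  have vH1: "verts H1 = V1"
    unfolding H1_def V1_def by (rule verts_Sc)
  have inT: "\<Phi>1 p \<in> T (fst p)" if pV: "p \<in> V1" for p
    using memV1[OF pV] psiT unfolding \<Phi>1_def by auto
  have inj1: "inj_on \<Phi>1 V1"
  proof (rule inj_onI)
    fix p p' assume p: "p \<in> V1" "p' \<in> V1" "\<Phi>1 p = \<Phi>1 p'"
    obtain L j i where pp: "p = (L, j, i)" "L \<in> S" "j < k L" "i < d L" using memV1[OF p(1)] by blast
    obtain L' j' i' where pp': "p' = (L', j', i')" "L' \<in> S" "j' < k L'" "i' < d L'" using memV1[OF p(2)] by blast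
    have e: "\<Psi> L (j, i) = \<Psi> L' (j', i')" using p(3) pp pp' by (simp add: \<Phi>1_def)
    have "L = L'"
    proof (rule ccontr)
      assume ne: "L \<noteq> L'"
      then have "T L \<inter> T L' = {}" using dT pp(2) pp'(2) by blast
      then show False using psiT[OF pp(2-4)] psiT[OF pp'(2-4)] e by auto
    qed
    then show "p = p'" using psiinj[of L j i j' i'] pp pp' e by simp
  qed
  have im1: "\<Phi>1 ` V1 = (\<Union>L\<in>S. T L)"
  proof
    show "\<Phi>1 ` V1 \<subseteq> (\<Union>L\<in>S. T L)"
    proof
      fix x assume "x \<in> \<Phi>1 ` V1"
      then obtain p where pV: "p \<in> V1" "x = \<Phi>1 p" by blast
      then obtain L j i where "x = \<Psi> L (j, i)" "L \<in> S" "j < k L" "i < d L" using memV1[OF pV(1)] \<Phi>1_def by auto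
      then show "x \<in> (\<Union>L\<in>S. T L)" using psiT by blast
    qed
    show "(\<Union>L\<in>S. T L) \<subseteq> \<Phi>1 ` V1"
    proof
      fix x assume "x \<in> (\<Union>L\<in>S. T L)"
      then obtain L where L: "L \<in> S" "x \<in> T L" by blast
      have "T L = \<Psi> L ` ({0..<k L} \<times> {0..<d L})" using bL L(1) bij_betw_def by metis
      then obtain ji where ji: "ji \<in> {0..<k L} \<times> {0..<d L}" "x = \<Psi> L ji" using L(2) by blast
      obtain j i where "ji = (j, i)" by (cases ji)
      then have "(L, j, i) \<in> V1" "x = \<Phi>1 (L, j, i)" using ji L(1) V1I \<Phi>1_def by auto
      then show "x \<in> \<Phi>1 ` V1" by blast
    qed
  qed
  have bij: "bij_betw \<Phi> (Inl ` verts H0 \<union> Inr ` V1) UNIV"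
  proof -
    have A: "bij_betw \<Phi> (Inl ` verts H0) B"
    proof -
      have "bij_betw (\<Phi> \<circ> Inl) (verts H0) B" using b0 by (simp add: \<Phi>_def comp_def)
      moreover have "inj_on Inl (verts H0)" by (simp add: inj_on_def)
      ultimately show ?thesis using bij_betw_comp_iff2 by (metis bij_betw_imp_inj_on bij_betw_imp_surj_on bij_betw_def comp_inj_on_iff image_comp)
    qed
    have Bb: "bij_betw \<Phi> (Inr ` V1) (\<Union>L\<in>S. T L)"
    proof -
      have "bij_betw (\<Phi> \<circ> Inr) V1 (\<Union>L\<in>S. T L)" using inj1 im1 by (simp add: \<Phi>_def comp_def bij_betw_def)
      moreover have "inj_on Inr V1" by (simp add: inj_on_def)
      ultimately show ?thesis by (metis bij_betw_imp_inj_on bij_betw_imp_surj_on bij_betw_def comp_inj_on_iff image_comp)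
    qed
    have "bij_betw \<Phi> (Inl ` verts H0 \<union> Inr ` V1) (B \<union> (\<Union>L\<in>S. T L))"
    proof (rule bij_betw_combine[OF A Bb])
      show "B \<inter> (\<Union>L\<in>S. T L) = {}" using dB by blast
    qed
    then show ?thesis using cov by simp
  qed
  have vH: "verts (graph_sum H0 H1) = Inl ` verts H0 \<union> Inr ` V1"
    using vH1 verts_sum by metis
  have B0: "Phb x \<in> B" if "x \<in> verts H0" for x using b0 that bij_betw_apply by metis
  have ar: "\<forall>p\<in>Inl ` verts H0 \<union> Inr ` V1. \<forall>p'\<in>Inl ` verts H0 \<union> Inr ` V1.
      (p, p') \<in> arcs (graph_sum H0 H1) \<longleftrightarrow> \<Phi> p' = F (\<Phi> p)"
  proof (intro ballI)
    fix p p' assume p: "p \<in> Inl ` verts H0 \<union> Inr ` V1" and p': "p' \<in> Inl ` verts H0 \<union> Inr ` V1"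
    show "(p, p') \<in> arcs (graph_sum H0 H1) \<longleftrightarrow> \<Phi> p' = F (\<Phi> p)"
    proof (cases p)
      case (Inl x)
      then have x: "x \<in> verts H0" using p by auto
      have FxB: "F (Phb x) \<in> B" using FB B0[OF x] by blast
      show ?thesis
      proof (cases p')
        case (Inl y)
        then have y: "y \<in> verts H0" using p' by auto
        have "(p, p') \<in> arcs (graph_sum H0 H1) \<longleftrightarrow> (x, y) \<in> arcs H0" unfolding \<open>p = Inl x\<close> Inl by (rule arcs_sum_Inl)
        also have "\<dots> \<longleftrightarrow> Phb y = F (Phb x)" using a0 x y by blast
        finally show ?thesis using \<open>p = Inl x\<close> Inl by (simp add: \<Phi>_def)
      next
        case (Inr y)
        then have "y \<in> V1" using p' by auto
        then obtain L j i where yy: "y = (L, j, i)" "L \<in> S" "j < k L" "i < d L" using memV1 by blast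
        have "\<Phi>1 y \<in> T L" using psiT[OF yy(2-4)] yy(1) by (simp add: \<Phi>1_def)
        then have "\<Phi>1 y \<notin> B" using dB yy(2) by blast
        moreover have "(p, p') \<notin> arcs (graph_sum H0 H1)" unfolding \<open>p = Inl x\<close> Inr by (rule arcs_sum_LR)
        ultimately show ?thesis using \<open>p = Inl x\<close> Inr FxB by (auto simp: \<Phi>_def)
      qed
    next
      case (Inr x)
      then have "x \<in> V1" using p by auto
      then obtain L j i where xx: "x = (L, j, i)" "L \<in> S" "j < k L" "i < d L" using memV1 by blast
      have sV: "(L, j, Suc i mod d L) \<in> V1" using xx V1I by simp
      have FT: "F (\<Phi>1 x) = \<Phi>1 (L, j, Suc i mod d L)" using aL xx by (simp add: \<Phi>1_def)
      have FxT: "F (\<Phi>1 x) \<in> T L" using FT inT[OF sV] by simp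
      have Tx: "T L \<inter> B = {}" using dB xx(2) by blast
      show ?thesis
      proof (cases p')
        case (Inl y)
        then have "y \<in> verts H0" using p' by auto
        then have "Phb y \<in> B" by (rule B0)
        moreover have "(p, p') \<notin> arcs (graph_sum H0 H1)" unfolding \<open>p = Inr x\<close> Inl by (rule arcs_sum_RL)
        ultimately show ?thesis using \<open>p = Inr x\<close> Inl FxT Tx by (auto simp: \<Phi>_def)
      next
        case (Inr y)
        then have y: "y \<in> V1" using p' by auto
        have "(p, p') \<in> arcs (graph_sum H0 H1) \<longleftrightarrow> (x, y) \<in> arcs H1" unfolding \<open>p = Inr x\<close> Inr by (rule arcs_sum_Inr)
        also have "\<dots> \<longleftrightarrow> y = (L, j, Suc i mod d L)"
        proof -
          obtain L' j' i' where "y = (L', j', i')" by (metis prod.collapse)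
          then show ?thesis unfolding xx(1) H1_def using xx(2-4) by (simp add: arcs_Sc)
        qed
        also have "\<dots> \<longleftrightarrow> \<Phi>1 y = \<Phi>1 (L, j, Suc i mod d L)"
          using inj1 y sV unfolding inj_on_def by blast
        also have "\<dots> \<longleftrightarrow> \<Phi>1 y = F (\<Phi>1 x)" using FT by simp
        finally show ?thesis using \<open>p = Inr x\<close> Inr by (simp add: \<Phi>_def)
      qed
    qed
  qed
  show ?thesis unfolding H1_def[symmetric]
    by (rule iso_from[OF bij vH ar])
qed



context FF begin

lemma frob3: "((x::'a) + y + z) ^ q = x^q + y^q + z^q" by (simp add: frob)

lemma beta_q: "\<beta> ^ q = \<beta> + 1"
proof -
  let ?y = "\<beta> ^ q"
  have "?y^2 + ?y + a = (\<beta>^2 + \<beta> + a)^q"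
    using a_Fq by (simp add: frob3 Fq_def power_mult[symmetric] mult.commute)
  then have y: "?y^2 + ?y + a = 0" using beta q_pos by simp
  have "(?y - \<beta>) * (?y + \<beta> + 1) = (?y^2 + ?y + a) - (\<beta>^2 + \<beta> + a)"
    by (simp add: power2_eq_square algebra_simps two)
  also have "\<dots> = 0" using y beta two by simp
  finally have "?y - \<beta> = 0 \<or> ?y + \<beta> + 1 = 0" by simp
  moreover have "?y \<noteq> \<beta>" using beta_notin by (simp add: Fq_def)
  ultimately have "?y + \<beta> + 1 = 0" by auto
  then have "?y + (\<beta> + 1) = 0" by (simp add: add.assoc)
  then show ?thesis by (rule add_eq0)
qed

definition B :: "'a \<times> 'a \<Rightarrow> 'a" where "B p = fst p + snd p * \<beta>"

lemma basis_inj: "u \<in> Fq q \<Longrightarrow> v \<in> Fq q \<Longrightarrow> u' \<in> Fq q \<Longrightarrow> v' \<in> Fq q \<Longrightarrow>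
   u + v * \<beta> = u' + v' * \<beta> \<Longrightarrow> u = u' \<and> v = v'"
proof -
  assume h: "u \<in> Fq q" "v \<in> Fq q" "u' \<in> Fq q" "v' \<in> Fq q" "u + v * \<beta> = u' + v' * \<beta>"
  show "u = u' \<and> v = v'"
  proof (cases "v = v'")
    case True then show ?thesis using h by simp
  next
    case False
    have "(v - v') * \<beta> = (u + v * \<beta>) - (u + v' * \<beta>)" by (simp add: algebra_simps)
    also have "\<dots> = (u' + v' * \<beta>) - (u + v' * \<beta>)" using h(5) by simp
    also have "\<dots> = u' - u" by simp
    finally have e: "(v - v') * \<beta> = u' - u" .
    have ne: "v - v' \<noteq> 0" using False by simp
    have "\<beta> = (u' - u) / (v - v')" using e ne by (simp add: eq_divide_eq mult.commute)
    moreover have "u' - u \<in> Fq q" "v - v' \<in> Fq q" using h by (simp_all add: diff_is_add Fq_add)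
    ultimately have "\<beta> \<in> Fq q" by (simp add: Fq_div)
    then show ?thesis using beta_notin by simp
  qed
qed

lemma inj_B: "inj_on B (Fq q \<times> Fq q)"
  unfolding inj_on_def B_def using basis_inj by auto

lemma card_Fq_le: "card (Fq q :: 'a set) \<le> q"
proof -
  have "card (B ` (Fq q \<times> Fq q)) = card (Fq q :: 'a set) * card (Fq q :: 'a set)"
    using card_image[OF inj_B] by (simp add: card_cartesian_product)
  moreover have "card (B ` (Fq q \<times> Fq q)) \<le> q^2" using cardU by (metis card_mono finite subset_UNIV)
  ultimately have "card (Fq q :: 'a set)^2 \<le> q^2" by (simp add: power2_eq_square)
  then show ?thesis by (simp add: power2_le_iff_abs_le) 
qed

lemma card_Fq_ge: "q \<le> card (Fq q :: 'a set)"
proof -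
  define T where "T = (\<lambda>x::'a. x + x^q)"
  have T_in: "T x \<in> Fq q" for x unfolding T_def Fq_def by (simp add: frob pow_qq add.commute)
  have fib: "{x. T x = T x0} \<subseteq> (\<lambda>z. z + x0) ` Fq q" for x0
  proof
    fix x assume "x \<in> {x. T x = T x0}"
    then have e: "x + x^q = x0 + x0^q" by (simp add: T_def)
    have "(x^q + x0^q) + (x + x0) = (x + x^q) + (x0 + x0^q)" by (simp add: algebra_simps)
    also have "\<dots> = 0" using e by simp
    finally have "x^q + x0^q = x + x0" by (rule add_eq0)
    then have "(x + x0)^q = x + x0" by (simp add: frob)
    then have "x + x0 \<in> Fq q" by (simp add: Fq_def)
    moreover have "x = (x + x0) + x0" by (simp add: add.assoc)
    ultimately show "x \<in> (\<lambda>z. z + x0) ` Fq q" by blast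
  qed
  have cf: "card {x. T x = y} \<le> card (Fq q :: 'a set)" if yT: "y \<in> T ` UNIV" for y
  proof -
    obtain x0 where "y = T x0" using yT by auto
    have "card {x. T x = y} \<le> card ((\<lambda>z. z + x0) ` Fq q)"
      using fib[of x0] \<open>y = T x0\<close> by (intro card_mono) auto
    also have "\<dots> \<le> card (Fq q :: 'a set)" by (rule card_image_le) simp
    finally show ?thesis .
  qed
  have "UNIV = (\<Union>y\<in>T ` UNIV. {x. T x = y})" by auto
  then have "q^2 \<le> (\<Sum>y\<in>T ` UNIV. card {x. T x = y})"
    using cardU card_UN_le[of "T ` UNIV" "\<lambda>y. {x. T x = y}"] by simp
  also have "\<dots> \<le> (\<Sum>y\<in>T ` UNIV. card (Fq q :: 'a set))" by (rule sum_mono) (use cf in auto)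
  also have "\<dots> = card (T ` UNIV) * card (Fq q :: 'a set)" by simp
  also have "\<dots> \<le> card (Fq q :: 'a set) * card (Fq q :: 'a set)"
    using T_in by (intro mult_right_mono card_mono) auto
  finally have "q^2 \<le> card (Fq q :: 'a set)^2" by (simp add: power2_eq_square)
  then show ?thesis by (simp add: power2_le_iff_abs_le)
qed

lemma card_Fq: "card (Fq q :: 'a set) = q" using card_Fq_le card_Fq_ge by simp

lemma basis_surj: "\<exists>u\<in>Fq q. \<exists>v\<in>Fq q. x = u + v * \<beta>"
proof -
  have "card (B ` (Fq q \<times> Fq q)) = q^2"
    using card_image[OF inj_B] card_Fq by (simp add: card_cartesian_product power2_eq_square)
  then have "B ` (Fq q \<times> Fq q) = UNIV" using cardU by (intro card_eq_UNIV_imp_eq_UNIV) simp_all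
  then have "x \<in> B ` (Fq q \<times> Fq q)" by simp
  then obtain p where "p \<in> Fq q \<times> Fq q" "x = B p" by blast
  then show ?thesis unfolding B_def by (cases p) auto
qed

end


context FF begin


lemma w_ne0: "u \<in> Fq q \<Longrightarrow> v \<in> Fq q \<Longrightarrow> (u, v) \<noteq> (0, 0) \<Longrightarrow> u + v * \<beta> \<noteq> 0"
  using basis_inj[of u v 0 0] by auto

lemma w_q: "u \<in> Fq q \<Longrightarrow> v \<in> Fq q \<Longrightarrow> (u + v * \<beta>) ^ q = u + v * \<beta> + v"
  by (simp add: frob power_mult_distrib beta_q Fq_def algebra_simps)

lemma w_norm: "(u + v * \<beta>) * (u + v * \<beta> + v) = u^2 + u*v + v^2*a"
proof -
  have ab: "\<beta>^2 + \<beta> = a" using beta add_eq0 by (simp add: add.assoc)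
  have "(u + v * \<beta>) * (u + v * \<beta> + v) = u^2 + u*v + v^2*(\<beta>^2 + \<beta>) + 2 * (u*v*\<beta>)"
    by (simp add: power2_eq_square algebra_simps)
  then show ?thesis using ab two by simp
qed

lemma key:
  assumes u: "u \<in> Fq q" and v: "v \<in> Fq q" and c: "c \<in> Fq q" and w0: "u + v * \<beta> \<noteq> 0"
  shows "((u + v * \<beta>) ^ (q - 1) - c) ^ (q + 1) = gfun a c u v"
proof -
  define w where "w = u + v * \<beta>"
  define W where "W = w ^ q"
  have W: "W = w + v" unfolding W_def w_def using w_q u v by simp
  have wne: "w \<noteq> 0" using w0 w_def by simp
  have Wne: "W \<noteq> 0" using wne unfolding W_def by simp
  define r where "r = w ^ (q - 1)"
  have rw: "W = r * w" unfolding W_def r_def using power_minus_mult[OF q_pos, of w] by (simp add: mult.commute)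
  have "r^q * W = r^q * w^q" by (simp add: W_def)
  also have "\<dots> = (r * w)^q" by (simp add: power_mult_distrib)
  also have "\<dots> = W ^ q" using rw by simp
  also have "\<dots> = w" unfolding W_def by (rule pow_qq)
  finally have rq: "r^q = w / W" using Wne by (simp add: field_simps)
  have r: "r = W / w" using rw wne by (simp add: field_simps)
  have z: "(r - c) ^ q = w / W + c" using rq c by (simp add: diff_is_add frob Fq_def)
  have "(r - c)^(q+1) = (r - c)^q * (r - c)" by simp
  also have "\<dots> = (w / W + c) * (W / w + c)" using z r by (simp add: diff_is_add)
  also have "\<dots> = 1 + c^2 + c * ((w^2 + W^2) / (w * W))"
    using wne Wne by (simp add: field_simps power2_eq_square)
  also have "w^2 + W^2 = v^2" using frob2[of w W] W by (simp add: add.assoc[symmetric])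
  also have "w * W = u^2 + u*v + v^2*a" using W w_norm w_def by simp
  finally show ?thesis unfolding gfun_def r_def w_def by (simp add: add.commute)
qed

lemma G_zero:
  assumes u: "u \<in> Fq q" and v: "v \<in> Fq q" and c: "c \<in> Fq q" and w0: "u + v * \<beta> \<noteq> 0"
    and z: "((u + v * \<beta>) ^ (q - 1) - c) ^ (q + 1) = 0"
  shows "c = 1 \<and> v = 0"
proof -
  define w where "w = u + v * \<beta>"
  define W where "W = w ^ q"
  have W: "W = w + v" unfolding W_def w_def using w_q u v by simp
  have wne: "w \<noteq> 0" using w0 w_def by simp
  have Wne: "W \<noteq> 0" using wne unfolding W_def by simp
  define r where "r = w ^ (q - 1)"
  have rw: "W = r * w" unfolding W_def r_def using power_minus_mult[OF q_pos, of w] by (simp add: mult.commute)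
  have "r^q * W = r^q * w^q" by (simp add: W_def)
  also have "\<dots> = (r * w)^q" by (simp add: power_mult_distrib)
  also have "\<dots> = W ^ q" using rw by simp
  also have "\<dots> = w" unfolding W_def by (rule pow_qq)
  finally have rq: "r^q * r = 1" using Wne wne rw by (simp add: field_simps)
  have "r = c" using z unfolding r_def w_def by auto
  then have "c * c = 1" using rq c by (simp add: Fq_def)
  then have "(c + 1)^2 = 0" using frob2[of c 1] by (simp add: power2_eq_square)
  then have c1: "c = 1" using add_eq0 by simp
  then have "W = w" using rw \<open>r = c\<close> by simp
  then show ?thesis using W c1 by (metis add_cancel_left_right)
qed

lemma gfun_Fq: "u \<in> Fq q \<Longrightarrow> v \<in> Fq q \<Longrightarrow> c \<in> Fq q \<Longrightarrow> gfun a c u v \<in> Fq q"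
  unfolding gfun_def using a_Fq by (simp add: Fq_add Fq_mult Fq_div Fq_pow)

end


context FF begin

lemma line_eq: "line q \<beta> u v = (\<lambda>l. l * (u + v * \<beta>)) ` Fq q"
  unfolding line_def by auto

lemma line_gen:
  assumes L: "L \<in> P1 q \<beta>" and x: "x \<in> L" "x \<noteq> 0"
  shows "L = (\<lambda>l. l * x) ` Fq q"
proof -
  obtain u v where uv: "u \<in> Fq q" "v \<in> Fq q" "(u, v) \<noteq> (0, 0)" "L = line q \<beta> u v"
    using L unfolding P1_def by auto
  define w where "w = u + v * \<beta>"
  obtain l0 where l0: "l0 \<in> Fq q" "x = l0 * w" using x uv unfolding line_eq w_def by auto
  have l0ne: "l0 \<noteq> 0" using l0 x by auto
  show ?thesis
  proof
    show "L \<subseteq> (\<lambda>l. l * x) ` Fq q"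
    proof
      fix y assume "y \<in> L"
      then obtain l where l: "l \<in> Fq q" "y = l * w" using uv unfolding line_eq w_def by auto
      have "y = (l / l0) * x" using l l0 l0ne by simp
      moreover have "l / l0 \<in> Fq q" using l l0 by (simp add: Fq_div)
      ultimately show "y \<in> (\<lambda>l. l * x) ` Fq q" by blast
    qed
    show "(\<lambda>l. l * x) ` Fq q \<subseteq> L"
    proof
      fix y assume "y \<in> (\<lambda>l. l * x) ` Fq q"
      then obtain l where l: "l \<in> Fq q" "y = l * x" by auto
      have "y = (l * l0) * w" using l l0 by simp
      moreover have "l * l0 \<in> Fq q" using l l0 by (simp add: Fq_mult)
      ultimately show "y \<in> L" using uv unfolding line_eq w_def by blast
    qed
  qed
qed

lemma line_unique: "L1 \<in> P1 q \<beta> \<Longrightarrow> L2 \<in> P1 q \<beta> \<Longrightarrow> x \<in> L1 \<Longrightarrow> x \<in> L2 \<Longrightarrow> x \<noteq> 0 \<Longrightarrow> L1 = L2"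
  using line_gen by metis

lemma line_cover: "\<exists>L\<in>P1 q \<beta>. (x::'a) \<in> L"
proof (cases "x = 0")
  case True
  have "line q \<beta> 1 0 \<in> P1 q \<beta>" unfolding P1_def by force
  moreover have "x \<in> line q \<beta> 1 0" using True unfolding line_eq by force
  ultimately show ?thesis by blast
next
  case False
  obtain u v where uv: "u \<in> Fq q" "v \<in> Fq q" "x = u + v * \<beta>" using basis_surj by blast
  then have "(u, v) \<noteq> (0, 0)" using False by auto
  then have "line q \<beta> u v \<in> P1 q \<beta>" using uv unfolding P1_def by blast
  moreover have "x \<in> line q \<beta> u v" using uv unfolding line_eq by (force intro: image_eqI[of _ _ 1])
  ultimately show ?thesis by blast
qed

lemma line10: "line q \<beta> 1 0 = Fq q" unfolding line_eq by simp

lemma Fq_P1: "Fq q \<in> P1 q \<beta>"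
proof -
  have "line q \<beta> 1 0 \<in> P1 q \<beta>" unfolding P1_def
    by (rule CollectI, rule exI[of _ 1], rule exI[of _ 0]) simp
  then show ?thesis by (simp add: line10)
qed

lemma line_u0: "u \<in> Fq q \<Longrightarrow> u \<noteq> 0 \<Longrightarrow> line q \<beta> u 0 = Fq q"
  using line_gen[OF Fq_P1, of u] by (simp add: line_eq)

lemma card_line: assumes "L \<in> P1 q \<beta>" shows "card (L - {0}) = q - 1"
proof -
  obtain u v where uv: "u \<in> Fq q" "v \<in> Fq q" "(u, v) \<noteq> (0, 0)" "L = line q \<beta> u v"
    using assms unfolding P1_def by auto
  have wne: "u + v * \<beta> \<noteq> 0" using w_ne0 uv by simp
  have "inj_on (\<lambda>l. l * (u + v * \<beta>)) (Fq q)" using wne by (auto simp: inj_on_def)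
  then have "card L = q" using uv card_image card_Fq unfolding line_eq by metis
  moreover have "0 \<in> L" using uv unfolding line_eq by force
  ultimately show ?thesis by (simp add: card_Diff_singleton)
qed

lemma line_rep_props:
  assumes "L \<in> P1 q \<beta>"
  shows "fst (line_rep q \<beta> L) \<in> Fq q \<and> snd (line_rep q \<beta> L) \<in> Fq q \<and>
    (fst (line_rep q \<beta> L), snd (line_rep q \<beta> L)) \<noteq> (0, 0) \<and>
    L = line q \<beta> (fst (line_rep q \<beta> L)) (snd (line_rep q \<beta> L))"
proof -
  have ex: "\<exists>p. (case p of (u, v) \<Rightarrow> u \<in> Fq q \<and> v \<in> Fq q \<and> (u, v) \<noteq> (0, 0) \<and> L = line q \<beta> u v)"
    using assms unfolding P1_def by auto
  show ?thesis using someI_ex[OF ex] unfolding line_rep_def by (auto split: prod.splits)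
qed

lemma mult_ord_props:
  assumes "(G::'a) \<in> Fq q" "G \<noteq> 0"
  shows "0 < mult_ord G \<and> G ^ mult_ord G = 1 \<and> (\<forall>i. 0 < i \<and> i < mult_ord G \<longrightarrow> G ^ i \<noteq> 1)"
proof -
  have ex: "\<exists>k. 0 < k \<and> G ^ k = 1" using Fq_pow_qm1[OF assms] q_ge2 by (intro exI[of _ "q - 1"]) auto
  show ?thesis unfolding mult_ord_def using LeastI_ex[OF ex] not_less_Least by blast
qed

end


context FF begin

lemma line_orbits:
  assumes L: "L \<in> P1 q \<beta>" and c: "c \<in> Fq q" and nb: "\<not> (c = 1 \<and> L = Fq q)"
  shows "\<exists>\<phi>. bij_betw \<phi> ({0..<(q-1) div ordg q \<beta> a c L} \<times> {0..<ordg q \<beta> a c L}) (L - {0}) \<and>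
     (\<forall>j<(q-1) div ordg q \<beta> a c L. \<forall>i<ordg q \<beta> a c L.
        \<phi> (j, Suc i mod ordg q \<beta> a c L) = (\<lambda>x. x * (x^(q-1) - c)^(q+1)) (\<phi> (j, i)))"
proof -
  define F where "F = (\<lambda>x::'a. x * (x^(q-1) - c)^(q+1))"
  obtain u v where rep: "line_rep q \<beta> L = (u, v)" by (cases "line_rep q \<beta> L")
  have uv: "u \<in> Fq q" "v \<in> Fq q" "(u, v) \<noteq> (0, 0)" "L = line q \<beta> u v"
    using line_rep_props[OF L] rep by auto
  define G where "G = gfun a c u v"
  define d where "d = ordg q \<beta> a c L"
  have dG: "d = mult_ord G" unfolding d_def ordg_def rep G_def by simp
  define w where "w = u + v * \<beta>"
  have wne: "w \<noteq> 0" using w_ne0 uv w_def by simp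
  have Lw: "L = (\<lambda>l. l * w) ` Fq q" using uv line_eq w_def by simp
  have GFq: "G \<in> Fq q" using gfun_Fq uv c G_def by simp
  have keyw: "(w ^ (q - 1) - c) ^ (q + 1) = G" using key uv c wne w_def G_def by simp
  have Gne: "G \<noteq> 0"
  proof
    assume G0: "G = 0"
    have "(w ^ (q - 1) - c) ^ (q + 1) = 0" using keyw G0 by simp
    then have cv: "c = 1 \<and> v = 0" using G_zero[OF uv(1) uv(2) c] wne unfolding w_def by blast
    then have "u \<noteq> 0" using uv(3) by auto
    then have "L = Fq q" using uv(4) cv line_u0 uv(1) by simp
    then show False using nb cv by simp
  qed
  have FL: "F x = G * x" if xL: "x \<in> L" for x
  proof -
    obtain l where l: "l \<in> Fq q" "x = l * w" using xL Lw by auto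
    show ?thesis
    proof (cases "l = 0")
      case True then show ?thesis using l by (simp add: F_def)
    next
      case False
      have "x ^ (q - 1) = w ^ (q - 1)" using l Fq_pow_qm1[OF l(1) False] by (simp add: power_mult_distrib)
      then show ?thesis using keyw by (simp add: F_def mult.commute)
    qed
  qed
  have GL: "G * x \<in> L" if xL: "x \<in> L" for x
  proof -
    obtain l where l: "l \<in> Fq q" "x = l * w" using xL Lw by auto
    then have "G * x = (G * l) * w" by simp
    moreover have "G * l \<in> Fq q" using GFq l by (simp add: Fq_mult)
    ultimately show ?thesis using Lw by blast
  qed
  have pw: "(F ^^ i) x = G ^ i * x \<and> (F ^^ i) x \<in> L" if "x \<in> L" for i x
    using that by (induction i) (auto simp: FL GL)
  have mo: "0 < d" "G ^ d = 1" "\<forall>i. 0 < i \<and> i < d \<longrightarrow> G ^ i \<noteq> 1"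
    using mult_ord_props[OF GFq Gne] dG by auto
  have "\<exists>k \<phi>. card (L - {0}) = k * d \<and> bij_betw \<phi> ({0..<k} \<times> {0..<d}) (L - {0}) \<and>
           (\<forall>j<k. \<forall>i<d. \<phi> (j, Suc i mod d) = F (\<phi> (j, i)))"
  proof (rule orbit_decomp)
    show "finite (L - {0})" by simp
    show "0 < d" by (rule mo(1))
    show "F ` (L - {0}) \<subseteq> L - {0}" using FL GL Gne by auto
    show "\<forall>x\<in>L - {0}. (F ^^ d) x = x" using pw mo(2) by auto
    show "\<forall>x\<in>L - {0}. \<forall>i. 0 < i \<and> i < d \<longrightarrow> (F ^^ i) x \<noteq> x"
    proof (intro ballI allI impI)
      fix x i assume x: "x \<in> L - {0}" and i: "0 < i \<and> i < d"
      have "G ^ i \<noteq> 1" using mo(3) i by auto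
      then show "(F ^^ i) x \<noteq> x" using pw[of x i] x by auto
    qed
  qed
  then obtain k \<phi> where k: "card (L - {0}) = k * d" "bij_betw \<phi> ({0..<k} \<times> {0..<d}) (L - {0})"
    "\<forall>j<k. \<forall>i<d. \<phi> (j, Suc i mod d) = F (\<phi> (j, i))" by blast
  have "(q - 1) div d = k" using k(1) card_line[OF L] mo(1) by simp
  then show ?thesis using k unfolding d_def F_def by metis
qed

end



theorem mainTheorem10:
  fixes q n :: nat and a \<beta> c :: "'a::{field,finite}"
  assumes "q = 2 ^ n"
    and "card (UNIV :: 'a set) = q ^ 2"
    and "a \<in> Fq q" and "abs_trace n a = 1"
    and "\<beta> ^ 2 + \<beta> + a = 0"
    and "c \<in> Fq q"
  shows "(c \<noteq> 0 \<and> c \<noteq> 1 \<longrightarrow>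
           graph_iso (functional_graph (\<lambda>x. x * (x ^ (q - 1) - c) ^ (q + 1)))
             (graph_sum (cycle_graph 1) (line_part q \<beta> a c (P1 q \<beta>))))
       \<and> (c = 1 \<longrightarrow>
           graph_iso (functional_graph (\<lambda>x. x * (x ^ (q - 1) - c) ^ (q + 1)))
             (graph_sum (cycle_tree_graph 1 (q - 1))
                (line_part q \<beta> a c (P1 q \<beta> - {line q \<beta> 1 0}))))"
proof -
  interpret FF q n a \<beta> using assms by unfold_locales auto
  define F where "F = (\<lambda>x::'a. x * (x ^ (q - 1) - c) ^ (q + 1))"
  define d where "d = ordg q \<beta> a c"
  define k where "k = (\<lambda>L. (q - 1) div d L)"
  have F0: "F 0 = 0" by (simp add: F_def)
  have dT: "\<forall>L1\<in>S. \<forall>L2\<in>S. L1 \<noteq> L2 \<longrightarrow> (L1 - {0}) \<inter> (L2 - {0}) = {}" if "S \<subseteq> P1 q \<beta>" for S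
    using line_unique that by blast
  show ?thesis
  proof (intro conjI impI)
    assume c: "c \<noteq> 0 \<and> c \<noteq> 1"
    have "\<forall>L\<in>P1 q \<beta>. \<exists>\<phi>. bij_betw \<phi> ({0..<k L} \<times> {0..<d L}) (L - {0}) \<and>
        (\<forall>j<k L. \<forall>i<d L. \<phi> (j, Suc i mod d L) = F (\<phi> (j, i)))"
      using line_orbits assms(6) c unfolding k_def d_def F_def by blast
    then obtain \<Psi> where \<Psi>: "\<forall>L\<in>P1 q \<beta>. bij_betw (\<Psi> L) ({0..<k L} \<times> {0..<d L}) (L - {0}) \<and>
        (\<forall>j<k L. \<forall>i<d L. \<Psi> L (j, Suc i mod d L) = F (\<Psi> L (j, i)))" by metis
    have "graph_iso (functional_graph F)
     (graph_sum (cycle_graph 1) (graph_Sum (P1 q \<beta>) (\<lambda>L. graph_copies (k L) (cycle_graph (d L)))))"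
    proof (rule assemble[where Phb = "\<lambda>_. 0" and B = "{0}" and T = "\<lambda>L. L - {0}" and \<Psi> = \<Psi>])
      show "bij_betw (\<lambda>_. 0::'a) (verts (cycle_graph 1)) {0}"
        by (simp add: cycle_graph_def verts_def bij_betw_def)
      show "\<forall>p\<in>verts (cycle_graph 1). \<forall>p'\<in>verts (cycle_graph 1). (p, p') \<in> arcs (cycle_graph 1) \<longleftrightarrow> (0::'a) = F 0"
        by (simp add: cycle_graph_def verts_def arcs_def F0)
      show "F ` {0} \<subseteq> {0}" using F0 by simp
      show "\<forall>L\<in>P1 q \<beta>. bij_betw (\<Psi> L) ({0..<k L} \<times> {0..<d L}) (L - {0})" using \<Psi> by blast
      show "\<forall>L\<in>P1 q \<beta>. \<forall>j<k L. \<forall>i<d L. \<Psi> L (j, Suc i mod d L) = F (\<Psi> L (j, i))" using \<Psi> by blast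
      show "\<forall>L\<in>P1 q \<beta>. (L - {0}) \<inter> {0} = {}" by auto
      show "\<forall>L1\<in>P1 q \<beta>. \<forall>L2\<in>P1 q \<beta>. L1 \<noteq> L2 \<longrightarrow> (L1 - {0}) \<inter> (L2 - {0}) = {}" using dT by blast
      show "{0} \<union> (\<Union>L\<in>P1 q \<beta>. L - {0}) = UNIV" using line_cover by blast
    qed
    then show "graph_iso (functional_graph (\<lambda>x. x * (x ^ (q - 1) - c) ^ (q + 1)))
             (graph_sum (cycle_graph 1) (line_part q \<beta> a c (P1 q \<beta>)))"
      unfolding line_part_def F_def k_def d_def .
  next
    assume c: "c = 1"
    define S where "S = P1 q \<beta> - {Fq q}"
    have "\<forall>L\<in>S. \<exists>\<phi>. bij_betw \<phi> ({0..<k L} \<times> {0..<d L}) (L - {0}) \<and>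
        (\<forall>j<k L. \<forall>i<d L. \<phi> (j, Suc i mod d L) = F (\<phi> (j, i)))"
      using line_orbits assms(6) unfolding k_def d_def F_def S_def by blast
    then obtain \<Psi> where \<Psi>: "\<forall>L\<in>S. bij_betw (\<Psi> L) ({0..<k L} \<times> {0..<d L}) (L - {0}) \<and>
        (\<forall>j<k L. \<forall>i<d L. \<Psi> L (j, Suc i mod d L) = F (\<Psi> L (j, i)))" by metis
    have FFq: "F x = 0" if "x \<in> Fq q" for x
    proof (cases "x = 0")
      case True then show ?thesis by (simp add: F_def)
    next
      case False then show ?thesis using Fq_pow_qm1[OF that False] c by (simp add: F_def)
    qed
    have "finite {1..q-1}" "finite (Fq q - {0::'a})" by auto
    moreover have "card {1..q-1} = card (Fq q - {0::'a})" using card_Fq by (simp add: card_Diff_singleton)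
    ultimately obtain \<psi> where \<psi>: "bij_betw \<psi> {1..q-1} (Fq q - {0::'a})"
      using finite_same_card_bij by blast
    define Phb where "Phb = (\<lambda>(i::nat, j). if j = q then 0 else \<psi> j)"
    have vT: "verts (cycle_tree_graph 1 (q - 1)) = {0} \<times> {1..q}"
      using q_ge2 by (simp add: cycle_tree_graph_def verts_def)
    have aT: "arcs (cycle_tree_graph 1 (q - 1)) = {((0, j), (0, q)) | j. 1 \<le> j \<and> j \<le> q - 1} \<union> {((0, q), (0, q))}"
      using q_ge2 by (auto simp: cycle_tree_graph_def arcs_def)
    have ne: "\<psi> j \<noteq> 0 \<and> \<psi> j \<in> Fq q" if "j \<in> {1..q-1}" for j using \<psi> that by (auto simp: bij_betw_def)
    have "graph_iso (functional_graph F)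
     (graph_sum (cycle_tree_graph 1 (q - 1)) (graph_Sum S (\<lambda>L. graph_copies (k L) (cycle_graph (d L)))))"
    proof (rule assemble[where Phb = Phb and B = "Fq q" and T = "\<lambda>L. L - {0}" and \<Psi> = \<Psi>])
      show "bij_betw Phb (verts (cycle_tree_graph 1 (q - 1))) (Fq q)"
        unfolding vT bij_betw_def
      proof
        show "inj_on Phb ({0} \<times> {1..q})"
        proof (rule inj_onI)
          fix x y assume xy: "x \<in> {0::nat} \<times> {1..q}" "y \<in> {0::nat} \<times> {1..q}" "Phb x = Phb y"
          obtain j where j: "x = (0, j)" "1 \<le> j" "j \<le> q" using xy(1) by auto
          obtain j' where j': "y = (0, j')" "1 \<le> j'" "j' \<le> q" using xy(2) by auto
          show "x = y"
          proof (cases "j = q \<or> j' = q")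
            case True then show ?thesis using xy(3) j j' ne unfolding Phb_def
              by (auto split: if_splits)
          next
            case False
            then have "\<psi> j = \<psi> j'" using xy(3) j j' unfolding Phb_def by auto
            then show ?thesis using False j j' \<psi> unfolding bij_betw_def inj_on_def by auto
          qed
        qed
        show "Phb ` ({0} \<times> {1..q}) = Fq q"
        proof
          show "Phb ` ({0} \<times> {1..q}) \<subseteq> Fq q" using ne unfolding Phb_def by auto
          show "Fq q \<subseteq> Phb ` ({0} \<times> {1..q})"
          proof
            fix x :: 'a assume x: "x \<in> Fq q"
            show "x \<in> Phb ` ({0} \<times> {1..q})"
            proof (cases "x = 0")
              case True
              then have "x = Phb (0, q)" unfolding Phb_def by simp
              then show ?thesis using q_ge2 by force
            next
              case False
              have "x \<in> Fq q - {0}" using x False by simp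
              then have "x \<in> \<psi> ` {1..q-1}" using \<psi> by (simp add: bij_betw_def)
              then obtain j where j: "j \<in> {1..q-1}" "x = \<psi> j" by blast
              have jq: "j \<noteq> q" "1 \<le> j" "j \<le> q" using j(1) q_ge2 by auto
              have "x = Phb (0, j)" unfolding Phb_def using j(2) jq(1) by simp
              moreover have "(0, j) \<in> {0::nat} \<times> {1..q}" using jq by simp
              ultimately show ?thesis by blast
            qed
          qed
        qed
      qed
      show "\<forall>p\<in>verts (cycle_tree_graph 1 (q - 1)). \<forall>p'\<in>verts (cycle_tree_graph 1 (q - 1)).
          (p, p') \<in> arcs (cycle_tree_graph 1 (q - 1)) \<longleftrightarrow> Phb p' = F (Phb p)"
      proof (intro ballI)
        fix p p' assume p: "p \<in> verts (cycle_tree_graph 1 (q - 1))" and p': "p' \<in> verts (cycle_tree_graph 1 (q - 1))"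
        obtain j where j: "p = (0, j)" "1 \<le> j" "j \<le> q" using p vT by auto
        obtain j' where j': "p' = (0, j')" "1 \<le> j'" "j' \<le> q" using p' vT by auto
        have "Phb p \<in> Fq q" using j ne unfolding Phb_def by auto
        then have "F (Phb p) = 0" using FFq by blast
        moreover have "Phb p' = 0 \<longleftrightarrow> j' = q" using j' ne unfolding Phb_def by auto
        moreover have "(p, p') \<in> arcs (cycle_tree_graph 1 (q - 1)) \<longleftrightarrow> j' = q"
          unfolding aT using j j' by auto
        ultimately show "(p, p') \<in> arcs (cycle_tree_graph 1 (q - 1)) \<longleftrightarrow> Phb p' = F (Phb p)" by simp
      qed
      show "F ` Fq q \<subseteq> Fq q" using FFq by auto
      show "\<forall>L\<in>S. bij_betw (\<Psi> L) ({0..<k L} \<times> {0..<d L}) (L - {0})" using \<Psi> by blast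
      show "\<forall>L\<in>S. \<forall>j<k L. \<forall>i<d L. \<Psi> L (j, Suc i mod d L) = F (\<Psi> L (j, i))" using \<Psi> by blast
      show "\<forall>L\<in>S. (L - {0}) \<inter> Fq q = {}"
        using line_unique Fq_P1 unfolding S_def by blast
      show "\<forall>L1\<in>S. \<forall>L2\<in>S. L1 \<noteq> L2 \<longrightarrow> (L1 - {0}) \<inter> (L2 - {0}) = {}" using dT unfolding S_def by blast
      show "Fq q \<union> (\<Union>L\<in>S. L - {0}) = UNIV"
      proof -
        have "x \<in> Fq q \<union> (\<Union>L\<in>S. L - {0})" for x :: 'a
        proof (cases "x = 0")
          case True then show ?thesis by simp
        next
          case False
          obtain L where "L \<in> P1 q \<beta>" "x \<in> L" using line_cover by blast
          then show ?thesis using False unfolding S_def by (cases "L = Fq q") auto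
        qed
        then show ?thesis by blast
      qed
    qed
    then show "graph_iso (functional_graph (\<lambda>x. x * (x ^ (q - 1) - c) ^ (q + 1)))
             (graph_sum (cycle_tree_graph 1 (q - 1))
                (line_part q \<beta> a c (P1 q \<beta> - {line q \<beta> 1 0})))"
      unfolding line_part_def F_def k_def d_def line10 S_def .
  qed
qed


end
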